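(* Consider the Boosted HiPPA setting described in the context, with $\gamma>0$, $\sigma\in(0,\frac1{p\gamma})$, $\vartheta\in(0,1)$, and let $x^k$ be an iterate generated by the algorithm, with direction $d^k\in\mathbb{R}^n$. If $P_k(x^k)\neq x^k$, then there exists $\bar m\in\mathbb{N}_0$ such that, with $\alpha_k=\vartheta^{\bar m}$ and $\hat x^{k+1}=(1-\alpha_k)P_k(x^k)+\alpha_k(x^k+d^k)$, the inequality $$\varphi^{p,\varepsilon_{k+1}}_\gamma(\hat x^{k+1})\le\varphi^{p,\varepsilon_k}_\gamma(x^k)-\sigma\|R^{\varepsilon_k}_\gamma(x^k)\|^p+\varepsilon_k+\varepsilon_{k+1}$$ holds; consequently the backtracking loop terminates after finitely many steps.
   Context: Standing setting. $p>1$; $\varphi:\mathbb{R}^n\to\mathbb{R}\cup\{+\infty\}$ is proper, lsc and bounded from below. For $\gamma>0$: $\operatorname{prox}^p_{\gamma\varphi}(x):=\operatorname{argmin}_y\big(\varphi(y)+\frac1{p\gamma}\|x-y\|^p\big)$, $\varphi^p_\gamma(x):=\inf_y\big(\varphi(y)+\frac1{p\gamma}\|x-y\|^p\big)$. $\{\varepsilon_k\}_{k\ge0},\{\delta_k\}_{k\ge0}$ are non-increasing sequences of positive scalars with $\sum_k\varepsilon_k<\infty$ and $\delta_k\downarrow0$. Prox approximation: for each index $j$ and each point $x$ needed by the algorithm, a point $P_j(x)$ (written $\operatorname{prox}^{p,\varepsilon_j}_{\gamma\varphi}(x)$) is available with $\operatorname{dist}(P_j(x),\operatorname{prox}^p_{\gamma\varphi}(x))<\delta_j$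 and $\varphi(P_j(x))+\frac1{p\gamma}\|x-P_j(x)\|^p<\varphi^p_\gamma(x)+\varepsilon_j$. Define $\varphi^{p,\varepsilon_j}_\gamma(x):=\varphi(P_j(x))+\frac1{p\gamma}\|x-P_j(x)\|^p$ and $R^{\varepsilon_j}_\gamma(x):=x-P_j(x)$. Boosted HiPPA: choose $x^0$, $\gamma>0$, $\sigma\in(0,\frac1{p\gamma})$, $\vartheta\in(0,1)$. At iteration $k$: set $\bar x^k:=P_k(x^k)$; choose a direction $d^k\in\mathbb{R}^n$ (not necessarily a descent direction); for $m=0,1,2,\dots$ set $\alpha_k=\vartheta^m$, $\hat x^{k+1}=(1-\alpha_k)\bar x^k+\alpha_k(x^k+d^k)$, until $\varphi^{p,\varepsilon_{k+1}}_\gamma(\hat x^{k+1})\le\varphi^{p,\varepsilon_k}_\gamma(x^k)-\sigma\|R^{\varepsilon_k}_\gamma(x^k)\|^p+\varepsilon_k+\varepsilon_{k+1}$; then set $x^{k+1}=\hat x^{k+1}$. *)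

theory Defs
  imports "HOL-Analysis.Analysis"
begin

definition lsc :: "('a::topological_space \<Rightarrow> ereal) \<Rightarrow> bool" where
  "lsc f \<longleftrightarrow> (\<forall>x. f x \<le> Liminf (at x) f)"

definition ppen :: "real \<Rightarrow> real \<Rightarrow> 'a::real_normed_vector \<Rightarrow> 'a \<Rightarrow> real" where
  "ppen p \<gamma> x y = norm (x - y) powr p / (p * \<gamma>)"

definition moreau_env :: "real \<Rightarrow> real \<Rightarrow> ('a::real_normed_vector \<Rightarrow> ereal) \<Rightarrow> 'a \<Rightarrow> ereal" where
  "moreau_env p \<gamma> \<phi> x = (INF y. \<phi> y + ereal (ppen p \<gamma> x y))"

definition hprox :: "real \<Rightarrow> real \<Rightarrow> ('a::real_normed_vector \<Rightarrow> ereal) \<Rightarrow> 'a \<Rightarrow> 'a set" where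
  "hprox p \<gamma> \<phi> x = {y. \<forall>z. \<phi> y + ereal (ppen p \<gamma> x y) \<le> \<phi> z + ereal (ppen p \<gamma> x z)}"

definition approx_env :: "real \<Rightarrow> real \<Rightarrow> ('a::real_normed_vector \<Rightarrow> ereal) \<Rightarrow> (nat \<Rightarrow> 'a \<Rightarrow> 'a) \<Rightarrow> nat \<Rightarrow> 'a \<Rightarrow> ereal" where
  "approx_env p \<gamma> \<phi> P j x = \<phi> (P j x) + ereal (ppen p \<gamma> x (P j x))"

definition resid :: "(nat \<Rightarrow> 'a \<Rightarrow> 'a) \<Rightarrow> nat \<Rightarrow> 'a \<Rightarrow> 'a::real_normed_vector" where
  "resid P j x = x - P j x"

end

theory Submission
  imports Defs
begin

theorem theorem9:
  fixes \<phi> :: "'a::euclidean_space \<Rightarrow> ereal"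
    and p \<gamma> \<sigma> \<theta> :: real
    and \<epsilon> \<delta> :: "nat \<Rightarrow> real"
    and P :: "nat \<Rightarrow> 'a \<Rightarrow> 'a"
    and k :: nat and x d :: 'a
  assumes p: "p > 1"
    and proper: "\<forall>y. \<phi> y \<noteq> -\<infinity>" "\<exists>y. \<phi> y \<noteq> \<infinity>"
    and lsc: "lsc \<phi>"
    and bdd: "\<exists>b::real. \<forall>y. ereal b \<le> \<phi> y"
    and eps: "\<forall>j. \<epsilon> j > 0" "antimono \<epsilon>" "summable \<epsilon>"
    and dlt: "\<forall>j. \<delta> j > 0" "antimono \<delta>" "\<delta> \<longlonglongrightarrow> 0"
    and P_dist: "\<forall>j y. infdist (P j y) (hprox p \<gamma> \<phi> y) < \<delta> j"
    and P_val: "\<forall>j y. approx_env p \<gamma> \<phi> P j y < moreau_env p \<gamma> \<phi> y + ereal (\<epsilon> j)"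
    and gamma: "\<gamma> > 0"
    and sigma: "0 < \<sigma>" "\<sigma> < 1 / (p * \<gamma>)"
    and theta: "0 < \<theta>" "\<theta> < 1"
    and neq: "P k x \<noteq> x"
  shows "\<exists>m::nat. let \<alpha> = \<theta> ^ m;
                      xh = (1 - \<alpha>) *\<^sub>R P k x + \<alpha> *\<^sub>R (x + d)
                  in approx_env p \<gamma> \<phi> P (Suc k) xh
                     \<le> approx_env p \<gamma> \<phi> P k x - ereal (\<sigma> * norm (resid P k x) powr p)
                       + ereal (\<epsilon> k) + ereal (\<epsilon> (Suc k))"
proof -
  define xb where "xb = P k x"
  define v where "v = x + d - xb"
  define n where "n = norm (x - xb)"
  obtain y0 where y0: "\<phi> y0 \<noteq> \<infinity>" using proper(2) by blast
  have fin_me: "moreau_env p \<gamma> \<phi> x < \<infinity>"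
  proof -
    have "moreau_env p \<gamma> \<phi> x \<le> \<phi> y0 + ereal (ppen p \<gamma> x y0)"
      unfolding moreau_env_def by (rule INF_lower) simp
    also have "\<dots> < \<infinity>" using y0 by (cases "\<phi> y0") auto
    finally show ?thesis .
  qed
  have "approx_env p \<gamma> \<phi> P k x < \<infinity>"
  proof -
    have "moreau_env p \<gamma> \<phi> x + ereal (\<epsilon> k) < \<infinity>"
      using fin_me by (cases "moreau_env p \<gamma> \<phi> x") auto
    then show ?thesis using P_val less_trans by blast
  qed
  hence "\<phi> xb \<noteq> \<infinity>" unfolding approx_env_def xb_def by auto
  then obtain c where c: "\<phi> xb = ereal c" using proper(1) by (cases "\<phi> xb") auto
  define A where "A = ppen p \<gamma> x xb"
  define S where "S = \<sigma> * n powr p"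
  have AS: "A - S \<ge> 0"
  proof -
    have "S \<le> (1 / (p * \<gamma>)) * n powr p" unfolding S_def using sigma
      by (intro mult_right_mono) auto
    hence "S \<le> n powr p / (p * \<gamma>)" by simp
    then show ?thesis unfolding A_def ppen_def n_def by simp
  qed
  have lim: "(\<lambda>m. ppen p \<gamma> ((1 - \<theta>^m) *\<^sub>R xb + \<theta>^m *\<^sub>R (x + d)) xb) \<longlonglongrightarrow> 0"
  proof -
    have eq: "\<And>m. ppen p \<gamma> ((1 - \<theta>^m) *\<^sub>R xb + \<theta>^m *\<^sub>R (x + d)) xb
       = (\<theta>^m * norm v) powr p / (p * \<gamma>)"
    proof -
      fix m
      have "(1 - \<theta>^m) *\<^sub>R xb + \<theta>^m *\<^sub>R (x + d) - xb = \<theta>^m *\<^sub>R v"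
        unfolding v_def by (simp add: algebra_simps)
      then show "?thesis m" unfolding ppen_def using theta by simp
    qed
    have t0: "(\<lambda>m. \<theta>^m * norm v) \<longlonglongrightarrow> 0"
      using LIMSEQ_power_zero[of \<theta>] theta by (auto intro: tendsto_mult_left_zero)
    have "(\<lambda>m. (\<theta>^m * norm v) powr p) \<longlonglongrightarrow> 0"
      by (rule tendsto_zero_powrI[OF t0 tendsto_const]) (use theta p in auto)
    then have "(\<lambda>m. (\<theta>^m * norm v) powr p / (p * \<gamma>)) \<longlonglongrightarrow> 0 / (p * \<gamma>)"
      by (intro tendsto_divide tendsto_const) (use p gamma in auto)
    then show ?thesis unfolding eq by simp
  qed
  have "\<forall>\<^sub>F m in sequentially. ppen p \<gamma> ((1 - \<theta>^m) *\<^sub>R xb + \<theta>^m *\<^sub>R (x + d)) xb < \<epsilon> k"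
    using order_tendstoD(2)[OF lim] eps(1) by auto
  then obtain m where m: "ppen p \<gamma> ((1 - \<theta>^m) *\<^sub>R xb + \<theta>^m *\<^sub>R (x + d)) xb < \<epsilon> k"
    by (meson eventually_sequentially order_refl)
  define xh where "xh = (1 - \<theta>^m) *\<^sub>R xb + \<theta>^m *\<^sub>R (x + d)"
  define B where "B = ppen p \<gamma> xh xb"
  have "approx_env p \<gamma> \<phi> P (Suc k) xh < moreau_env p \<gamma> \<phi> xh + ereal (\<epsilon> (Suc k))"
    using P_val by blast
  also have "moreau_env p \<gamma> \<phi> xh \<le> \<phi> xb + ereal B"
    unfolding moreau_env_def B_def by (rule INF_lower) simp
  finally have L: "approx_env p \<gamma> \<phi> P (Suc k) xh \<le> ereal (c + B + \<epsilon> (Suc k))"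
    using c by (simp add: add_right_mono order_less_imp_le)
  have B: "B < \<epsilon> k" using m unfolding B_def xh_def .
  have R: "approx_env p \<gamma> \<phi> P k x - ereal (\<sigma> * norm (resid P k x) powr p)
           + ereal (\<epsilon> k) + ereal (\<epsilon> (Suc k)) = ereal (c + A - S + \<epsilon> k + \<epsilon> (Suc k))"
    unfolding approx_env_def resid_def A_def S_def n_def xb_def[symmetric] c by simp
  have "approx_env p \<gamma> \<phi> P (Suc k) xh \<le> approx_env p \<gamma> \<phi> P k x - ereal (\<sigma> * norm (resid P k x) powr p)
           + ereal (\<epsilon> k) + ereal (\<epsilon> (Suc k))"
  proof -
    have "ereal (c + B + \<epsilon> (Suc k)) \<le> ereal (c + A - S + \<epsilon> k + \<epsilon> (Suc k))"
      using B AS by simp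
    then show ?thesis unfolding R using L by (rule order_trans[rotated])
  qed
  then show ?thesis unfolding xh_def xb_def Let_def by blast
qed

end
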